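(* Let $G$ be a group with Property RD with respect to a length function $l$, and let $h\in G$ be any element (not necessarily of finite order). For $m\ge0$ let $n_m=|\{g\in C(h): l(g)=m\}|$, and assume $(n_m)$ does not grow polynomially: for every polynomial $P$ there are infinitely many $m$ with $n_m>P(m)$. Then every bounded trace $\tau:C^*_{\mathrm{red}}G\to\mathbb{C}$ satisfies $\tau(h)=0$.
   Context: A length function on $G$ is $l:G\to\mathbb{Z}_{\ge0}$ with $l(fg)\le l(f)+l(g)$, $l(g^{-1})=l(g)$, $l(e)=0$, and $l^{-1}(S)$ finite for finite $S$. $\|\sum c_g g\|_{H^s}^2=\sum|c_g|^2(1+l(g))^{2s}$, and $H^s(G)$ is the completion of $\mathbb{C}G$ in this norm. $G$ has Property RD with respect to $l$ if there are constants $C,s$ with $\|x\|_{C^*_{\mathrm{red}}G}\le C\|x\|_{H^s}$ for all $x\in\mathbb{C}G$. $C(h)$ is the conjugacy class of $h$. A trace is a bounded linear functional $\tau$ with $\tau(ab)=\tau(ba)$. *)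

theory Defs
  imports "HOL-Analysis.Analysis" "HOL-Computational_Algebra.Polynomial"
begin

text \<open>The group G is a type of class group_add; the group law is written +
 (not assumed commutative), the inverse of g is -g, the identity is 0.\<close>

definition length_function :: "('a::group_add \<Rightarrow> nat) \<Rightarrow> bool" where
  "length_function l \<longleftrightarrow>
     (\<forall>f g. l (f + g) \<le> l f + l g) \<and> (\<forall>g. l (- g) = l g) \<and> l 0 = 0 \<and>
     (\<forall>S. finite S \<longrightarrow> finite (l -` S))"

definition supp :: "('a \<Rightarrow> complex) \<Rightarrow> 'a set" where
  "supp x = {g. x g \<noteq> 0}"

definition groupring :: "('a \<Rightarrow> complex) set" where
  "groupring = {x. finite (supp x)}"

definition delta :: "'a \<Rightarrow> 'a \<Rightarrow> complex" where
  "delta h = (\<lambda>g. if g = h then 1 else 0)"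

definition conv :: "('a::group_add \<Rightarrow> complex) \<Rightarrow> ('a \<Rightarrow> complex) \<Rightarrow> 'a \<Rightarrow> complex" where
  "conv x y = (\<lambda>g. \<Sum>k\<in>supp x. x k * y (- k + g))"

definition l2 :: "('a \<Rightarrow> complex) set" where
  "l2 = {\<xi>. (\<lambda>g. (cmod (\<xi> g))\<^sup>2) summable_on UNIV}"

definition l2norm :: "('a \<Rightarrow> complex) \<Rightarrow> real" where
  "l2norm \<xi> = sqrt (\<Sum>\<^sub>\<infinity>g. (cmod (\<xi> g))\<^sup>2)"

definition red_norm :: "('a::group_add \<Rightarrow> complex) \<Rightarrow> real" where
  "red_norm x = Sup {l2norm (conv x \<xi>) | \<xi>. \<xi> \<in> l2 \<and> l2norm \<xi> \<le> 1}"

definition sobolev_norm :: "('a \<Rightarrow> nat) \<Rightarrow> real \<Rightarrow> ('a \<Rightarrow> complex) \<Rightarrow> real" where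
  "sobolev_norm l s x = sqrt (\<Sum>g\<in>supp x. (cmod (x g))\<^sup>2 * (1 + real (l g)) powr (2 * s))"

definition property_RD :: "('a::group_add \<Rightarrow> nat) \<Rightarrow> bool" where
  "property_RD l \<longleftrightarrow> (\<exists>C s. \<forall>x\<in>groupring. red_norm x \<le> C * sobolev_norm l s x)"

definition conj_class :: "'a::group_add \<Rightarrow> 'a set" where
  "conj_class h = {g + h + - g | g. True}"

text \<open>A bounded trace on the reduced C*-algebra, described by its restriction
 to the dense subalgebra CG: a linear functional, bounded for the reduced norm,
 with tau(ab) = tau(ba). Such functionals correspond exactly to bounded traces
 on the completion.\<close>
definition bounded_trace :: "(('a::group_add \<Rightarrow> complex) \<Rightarrow> complex) \<Rightarrow> bool" where
  "bounded_trace \<tau> \<longleftrightarrow>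
     (\<forall>x\<in>groupring. \<forall>y\<in>groupring. \<tau> (\<lambda>g. x g + y g) = \<tau> x + \<tau> y) \<and>
     (\<forall>c. \<forall>x\<in>groupring. \<tau> (\<lambda>g. c * x g) = c * \<tau> x) \<and>
     (\<exists>K. \<forall>x\<in>groupring. cmod (\<tau> x) \<le> K * red_norm x) \<and>
     (\<forall>x\<in>groupring. \<forall>y\<in>groupring. \<tau> (conv x y) = \<tau> (conv y x))"

end

theory Submission imports Defs begin

lemma translate_summable:
  fixes \<xi> :: "'a::group_add \<Rightarrow> complex"
  assumes "\<xi> \<in> l2"
  shows "(\<lambda>g. (cmod (\<xi> (- k + g)))\<^sup>2) summable_on UNIV"
    and "(\<Sum>\<^sub>\<infinity>g. (cmod (\<xi> (- k + g)))\<^sup>2) = (\<Sum>\<^sub>\<infinity>g. (cmod (\<xi> g))\<^sup>2)"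
proof -
  have b: "bij_betw (\<lambda>g. - k + g) UNIV UNIV"
    by (rule bij_betwI[where g="\<lambda>g. k + g"]) (auto simp: add.assoc[symmetric])
  show "(\<lambda>g. (cmod (\<xi> (- k + g)))\<^sup>2) summable_on UNIV"
    using summable_on_reindex_bij_betw[OF b, of "\<lambda>g. (cmod (\<xi> g))\<^sup>2"] assms by (simp add: l2_def)
  show "(\<Sum>\<^sub>\<infinity>g. (cmod (\<xi> (- k + g)))\<^sup>2) = (\<Sum>\<^sub>\<infinity>g. (cmod (\<xi> g))\<^sup>2)"
    using infsum_reindex_bij_betw[OF b, of "\<lambda>g. (cmod (\<xi> g))\<^sup>2"] by simp
qed

lemma sum_translate:
  fixes \<xi> :: "'a::group_add \<Rightarrow> complex"
  assumes "\<xi> \<in> l2" "finite F"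
  shows "(\<lambda>g. \<Sum>k\<in>F. (cmod (\<xi> (- k + g)))\<^sup>2) summable_on UNIV \<and>
         (\<Sum>\<^sub>\<infinity>g. \<Sum>k\<in>F. (cmod (\<xi> (- k + g)))\<^sup>2) = card F * (\<Sum>\<^sub>\<infinity>g. (cmod (\<xi> g))\<^sup>2)"
  using assms(2)
proof (induction F rule: finite_induct)
  case empty
  then show ?case by simp
next
  case (insert a F)
  have s1: "(\<lambda>g. (cmod (\<xi> (- a + g)))\<^sup>2) summable_on UNIV" using translate_summable[OF assms(1)] by blast
  have e1: "(\<Sum>\<^sub>\<infinity>g. (cmod (\<xi> (- a + g)))\<^sup>2) = (\<Sum>\<^sub>\<infinity>g. (cmod (\<xi> g))\<^sup>2)" using translate_summable[OF assms(1)] by blast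
  have eq: "(\<lambda>g. \<Sum>k\<in>insert a F. (cmod (\<xi> (- k + g)))\<^sup>2) = (\<lambda>g. (cmod (\<xi> (- a + g)))\<^sup>2 + (\<Sum>k\<in>F. (cmod (\<xi> (- k + g)))\<^sup>2))"
    using insert by auto
  show ?case unfolding eq
    using summable_on_add[OF s1 insert.IH[THEN conjunct1]] infsum_add[OF s1 insert.IH[THEN conjunct1]]
      insert e1 by (simp add: algebra_simps)
qed

lemma pointwise:
  fixes x \<xi> :: "'a::group_add \<Rightarrow> complex"
  assumes "finite (supp x)"
  shows "(cmod (conv x \<xi> g))\<^sup>2 \<le> (real (card (supp x)) * (\<Sum>k\<in>supp x. cmod (x k)))\<^sup>2 * (\<Sum>k\<in>supp x. (cmod (\<xi> (- k + g)))\<^sup>2)"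
proof -
  let ?F = "supp x"
  let ?M = "\<Sum>k\<in>?F. cmod (x k)"
  let ?R = "sqrt (\<Sum>k\<in>?F. (cmod (\<xi> (- k + g)))\<^sup>2)"
  have M0: "?M \<ge> 0" by (simp add: sum_nonneg)
  have a: "cmod (\<xi> (- k + g)) \<le> ?R" if "k \<in> ?F" for k
  proof -
    have "(cmod (\<xi> (- k + g)))\<^sup>2 \<le> (\<Sum>k\<in>?F. (cmod (\<xi> (- k + g)))\<^sup>2)"
      by (rule member_le_sum[OF that]) (auto simp: assms)
    then show ?thesis by (metis norm_ge_zero real_le_rsqrt)
  qed
  have "cmod (conv x \<xi> g) \<le> (\<Sum>k\<in>?F. cmod (x k * \<xi> (- k + g)))"
    unfolding conv_def by (rule norm_sum)
  also have "\<dots> \<le> (\<Sum>k\<in>?F. ?M * ?R)"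
  proof (rule sum_mono)
    fix k assume k: "k \<in> ?F"
    have "cmod (x k) \<le> ?M" by (rule member_le_sum[OF k]) (auto simp: assms)
    then show "cmod (x k * \<xi> (- k + g)) \<le> ?M * ?R"
      unfolding norm_mult using a[OF k] M0 by (intro mult_mono) auto
  qed
  also have "\<dots> = real (card ?F) * ?M * ?R" by simp
  finally have b: "cmod (conv x \<xi> g) \<le> real (card ?F) * ?M * ?R" .
  have "(cmod (conv x \<xi> g))\<^sup>2 \<le> (real (card ?F) * ?M * ?R)\<^sup>2"
    using b by (intro power_mono) auto
  also have "\<dots> = (real (card ?F) * ?M)\<^sup>2 * ?R\<^sup>2" by (simp add: power_mult_distrib)
  also have "?R\<^sup>2 = (\<Sum>k\<in>?F. (cmod (\<xi> (- k + g)))\<^sup>2)" by (simp add: sum_nonneg)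
  finally show ?thesis .
qed

lemma red_norm_nonneg:
  fixes x :: "'a::group_add \<Rightarrow> complex"
  assumes "x \<in> groupring"
  shows "red_norm x \<ge> 0"
proof -
  let ?F = "supp x"
  let ?B = "(real (card ?F) * (\<Sum>k\<in>?F. cmod (x k)))\<^sup>2 * real (card ?F)"
  have fin: "finite ?F" using assms by (simp add: groupring_def)
  have bd: "l2norm (conv x \<xi>) \<le> sqrt ?B" if "\<xi> \<in> l2" "l2norm \<xi> \<le> 1" for \<xi>
  proof -
    note st = sum_translate[OF that(1) fin]
    have S1: "(\<Sum>\<^sub>\<infinity>g. (cmod (\<xi> g))\<^sup>2) \<le> 1"
      using that(2) unfolding l2norm_def by (metis real_sqrt_le_1_iff)
    have S0: "(\<Sum>\<^sub>\<infinity>g. (cmod (\<xi> g))\<^sup>2) \<ge> 0" by (rule infsum_nonneg) auto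
    have sm: "(\<lambda>g. (real (card ?F) * (\<Sum>k\<in>?F. cmod (x k)))\<^sup>2 * (\<Sum>k\<in>?F. (cmod (\<xi> (- k + g)))\<^sup>2)) summable_on UNIV"
      using st by (intro summable_on_cmult_right) blast
    have sc: "(\<lambda>g. (cmod (conv x \<xi> g))\<^sup>2) summable_on UNIV"
      by (rule summable_on_comparison_test[OF sm]) (auto intro: pointwise[OF fin])
    have "(\<Sum>\<^sub>\<infinity>g. (cmod (conv x \<xi> g))\<^sup>2) \<le> (\<Sum>\<^sub>\<infinity>g. (real (card ?F) * (\<Sum>k\<in>?F. cmod (x k)))\<^sup>2 * (\<Sum>k\<in>?F. (cmod (\<xi> (- k + g)))\<^sup>2))"
      by (rule infsum_mono[OF sc sm]) (rule pointwise[OF fin])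
    also have "\<dots> = (real (card ?F) * (\<Sum>k\<in>?F. cmod (x k)))\<^sup>2 * (real (card ?F) * (\<Sum>\<^sub>\<infinity>g. (cmod (\<xi> g))\<^sup>2))"
      using st by (subst infsum_cmult_right) auto
    also have "\<dots> \<le> ?B"
      using S1 S0 by (intro mult_left_mono) (auto intro: mult_left_le)
    finally show ?thesis unfolding l2norm_def by (rule real_sqrt_le_mono)
  qed
  have z: "(\<lambda>g. 0::complex) \<in> l2" by (simp add: l2_def)
  have cz: "conv x (\<lambda>g. 0) = (\<lambda>g. 0)" by (simp add: conv_def)
  have mem: "l2norm (conv x (\<lambda>g. 0)) \<in> {l2norm (conv x \<xi>) | \<xi>. \<xi> \<in> l2 \<and> l2norm \<xi> \<le> 1}"
    using z by (auto simp: l2norm_def)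
  have bdd: "bdd_above {l2norm (conv x \<xi>) | \<xi>. \<xi> \<in> l2 \<and> l2norm \<xi> \<le> 1}"
    using bd by (auto intro!: bdd_aboveI[where M="sqrt ?B"])
  have "l2norm (conv x (\<lambda>g. 0)) \<le> red_norm x"
    unfolding red_norm_def by (rule cSup_upper[OF mem bdd])
  then show ?thesis by (simp add: cz l2norm_def)
qed

lemma supp_delta: "supp (delta a) = {a}" by (auto simp: supp_def delta_def)

lemma delta_groupring: "delta a \<in> groupring" by (simp add: groupring_def supp_delta)

lemma conv_delta: "conv (delta a) (delta b) = delta (a + b :: 'a::group_add)"
  unfolding conv_def supp_delta
proof (rule ext)
  fix g
  have "(- a + g = b) = (g = a + b)" by (metis add.assoc add_minus_cancel minus_add_cancel)
  then show "(\<Sum>k\<in>{a}. delta a k * delta b (- k + g)) = delta (a + b) g"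
    by (simp add: delta_def)
qed

lemma bt_add: "bounded_trace \<tau> \<Longrightarrow> x \<in> groupring \<Longrightarrow> y \<in> groupring \<Longrightarrow> \<tau> (\<lambda>g. x g + y g) = \<tau> x + \<tau> y"
  unfolding bounded_trace_def by blast
lemma bt_smult: "bounded_trace \<tau> \<Longrightarrow> x \<in> groupring \<Longrightarrow> \<tau> (\<lambda>g. c * x g) = c * \<tau> x"
  unfolding bounded_trace_def by blast
lemma bt_bound: "bounded_trace \<tau> \<Longrightarrow> \<exists>K. \<forall>x\<in>groupring. cmod (\<tau> x) \<le> K * red_norm x"
  unfolding bounded_trace_def by blast
lemma bt_comm: "bounded_trace \<tau> \<Longrightarrow> x \<in> groupring \<Longrightarrow> y \<in> groupring \<Longrightarrow> \<tau> (conv x y) = \<tau> (conv y x)"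
  unfolding bounded_trace_def by blast

lemma trace_conj:
  assumes "bounded_trace \<tau>"
  shows "\<tau> (delta (g + h + - g)) = \<tau> (delta (h::'a::group_add))"
proof -
  have "\<tau> (conv (delta g) (delta (h + - g))) = \<tau> (conv (delta (h + - g)) (delta g))"
    by (rule bt_comm[OF assms delta_groupring delta_groupring])
  then show ?thesis by (simp add: conv_delta add.assoc add_diff_eq)
qed

definition ind :: "'a set \<Rightarrow> 'a \<Rightarrow> complex" where
  "ind S = (\<lambda>g. if g \<in> S then 1 else 0)"

lemma ind_groupring: "finite S \<Longrightarrow> ind S \<in> groupring"
  by (auto simp: groupring_def supp_def ind_def intro: finite_subset)

lemma trace_zero:
  assumes "bounded_trace \<tau>"
  shows "\<tau> (\<lambda>g. 0) = 0"
proof -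
  have "(\<lambda>g. 0::complex) \<in> groupring" by (simp add: groupring_def supp_def)
  then have "\<tau> (\<lambda>g. 0 * (0::complex)) = 0 * \<tau> (\<lambda>g. 0)"
    by (rule bt_smult[OF assms])
  then show ?thesis by simp
qed

lemma trace_ind:
  assumes "bounded_trace \<tau>" "finite S"
  shows "\<tau> (ind S) = (\<Sum>k\<in>S. \<tau> (delta k))"
  using assms(2)
proof (induction S rule: finite_induct)
  case empty
  then show ?case using trace_zero[OF assms(1)] by (simp add: ind_def)
next
  case (insert a F)
  have eq: "ind (insert a F) = (\<lambda>g. delta a g + ind F g)"
    using insert by (auto simp: ind_def delta_def)
  have "\<tau> (\<lambda>g. delta a g + ind F g) = \<tau> (delta a) + \<tau> (ind F)"
    by (rule bt_add[OF assms(1) delta_groupring ind_groupring[OF insert(1)]])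
  then show ?case using insert eq by simp
qed

lemma sob_ind:
  assumes "finite S" "\<forall>g\<in>S. l g = m"
  shows "sobolev_norm l s (ind S) = sqrt (real (card S)) * (1 + real m) powr s"
proof -
  have "supp (ind S) = S" by (auto simp: supp_def ind_def)
  then have "sobolev_norm l s (ind S) = sqrt (\<Sum>g\<in>S. (1 + real m) powr (2 * s))"
    unfolding sobolev_norm_def using assms(2) by (intro arg_cong[where f=sqrt] sum.cong) (auto simp: ind_def)
  also have "\<dots> = sqrt (real (card S) * ((1 + real m) powr s)\<^sup>2)"
  proof -
    have "((1 + real m) powr s)\<^sup>2 = (1 + real m) powr (2 * s)"
      by (simp add: power2_eq_square powr_add[symmetric])
    then show ?thesis by simp
  qed
  also have "\<dots> = sqrt (real (card S)) * (1 + real m) powr s"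
    by (simp add: real_sqrt_mult)
  finally show ?thesis .
qed

lemma card_bound:
  fixes n D t p :: real
  assumes "n \<ge> 0" "t > 0" "p > 0" "D \<ge> 0" "n * t \<le> D * sqrt n * p"
  shows "n \<le> (D / t)\<^sup>2 * p\<^sup>2"
proof (cases "n = 0")
  case True then show ?thesis by simp
next
  case False
  then have sn: "sqrt n > 0" using assms by simp
  have "sqrt n * sqrt n * t \<le> D * sqrt n * p" using assms by (simp add: real_sqrt_mult_self)
  then have "sqrt n * (sqrt n * t) \<le> sqrt n * (D * p)" by (simp add: algebra_simps)
  then have "sqrt n * t \<le> D * p" using sn by (rule mult_left_le_imp_le)
  then have "sqrt n \<le> D * p / t" using assms by (simp add: pos_le_divide_eq)
  then have "(sqrt n)\<^sup>2 \<le> (D * p / t)\<^sup>2" using sn by (intro power_mono) auto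
  then show ?thesis using assms by (simp add: power_divide power_mult_distrib)
qed

theorem mainTheorem5:
  fixes l :: "'a::group_add \<Rightarrow> nat" and h :: 'a
  assumes "length_function l"
    and "property_RD l"
    and "\<forall>P :: real poly. infinite {m::nat. real (card {g \<in> conj_class h. l g = m}) > poly P (real m)}"
    and "bounded_trace \<tau>"
  shows "\<tau> (delta h) = 0"
proof (rule ccontr)
  assume ne: "\<tau> (delta h) \<noteq> 0"
  define t where "t = cmod (\<tau> (delta h))"
  have t0: "t > 0" using ne by (simp add: t_def)
  obtain C s where RD: "\<forall>x\<in>groupring. red_norm x \<le> C * sobolev_norm l s x"
    using assms(2) unfolding property_RD_def by blast
  obtain K where K: "\<forall>x\<in>groupring. cmod (\<tau> x) \<le> K * red_norm x"
    using bt_bound[OF assms(4)] by blast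
  define D where "D = \<bar>max K 0 * C\<bar>"
  have D0: "D \<ge> 0" by (simp add: D_def)
  have Dbound: "cmod (\<tau> x) \<le> D * sobolev_norm l s x" if x: "x \<in> groupring" for x
  proof -
    have r0: "red_norm x \<ge> 0" by (rule red_norm_nonneg[OF x])
    have s0: "sobolev_norm l s x \<ge> 0" unfolding sobolev_norm_def by (intro real_sqrt_ge_zero sum_nonneg) auto
    have "cmod (\<tau> x) \<le> K * red_norm x" using K x by blast
    also have "\<dots> \<le> max K 0 * red_norm x" using r0 by (intro mult_right_mono) auto
    also have "\<dots> \<le> max K 0 * (C * sobolev_norm l s x)" using RD x by (intro mult_left_mono) auto
    also have "\<dots> \<le> D * sobolev_norm l s x" using s0 unfolding D_def
      by (metis abs_ge_self abs_mult_pos mult.assoc)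
    finally show ?thesis .
  qed
  define N where "N = nat \<lceil>2 * s\<rceil>"
  define E where "E = (D / t)\<^sup>2"
  have main: "real (card {g \<in> conj_class h. l g = m}) \<le> E * (1 + real m) ^ N" for m
  proof -
    define S where "S = {g \<in> conj_class h. l g = m}"
    have finS: "finite S"
    proof -
      have "finite (l -` {m})" using assms(1) unfolding length_function_def by blast
      moreover have "S \<subseteq> l -` {m}" by (auto simp: S_def)
      ultimately show ?thesis by (rule finite_subset[rotated])
    qed
    have eqd: "\<tau> (delta k) = \<tau> (delta h)" if "k \<in> S" for k
      using that trace_conj[OF assms(4)] by (auto simp: S_def conj_class_def)
    have "\<tau> (ind S) = of_nat (card S) * \<tau> (delta h)"
      using trace_ind[OF assms(4) finS] eqd by simp
    then have "real (card S) * t = cmod (\<tau> (ind S))" by (simp add: t_def norm_mult)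
    also have "\<dots> \<le> D * sobolev_norm l s (ind S)" by (rule Dbound[OF ind_groupring[OF finS]])
    also have "\<dots> = D * sqrt (real (card S)) * (1 + real m) powr s"
      using sob_ind[OF finS, of l m s] by (simp add: S_def)
    finally have "real (card S) \<le> (D / t)\<^sup>2 * ((1 + real m) powr s)\<^sup>2"
      by (intro card_bound) (use t0 D0 in auto)
    also have "((1 + real m) powr s)\<^sup>2 = (1 + real m) powr (2 * s)"
      by (simp add: power2_eq_square powr_add[symmetric])
    also have "\<dots> \<le> (1 + real m) powr (real N)"
    proof (rule powr_mono)
    have "2 * s \<le> of_int \<lceil>2 * s\<rceil>" by (rule le_of_int_ceiling)
    also have "\<dots> \<le> real N" unfolding N_def by linarith
    finally show "2 * s \<le> real N" .
  qed auto
    also have "\<dots> = (1 + real m) ^ N"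
      by (simp add: powr_realpow)
    finally show ?thesis unfolding S_def E_def by (simp add: mult_left_mono)
  qed
  define P where "P = smult E ([:1, 1:] ^ N)"
  have "poly P (real m) = E * (1 + real m) ^ N" for m
    by (simp add: P_def poly_power)
  then have "{m::nat. real (card {g \<in> conj_class h. l g = m}) > poly P (real m)} = {}"
    using main by (auto simp: not_less)
  then show False using assms(3) by (metis finite.emptyI)
qed

end
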